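(* Let $s,b\ge1$, let $(a_i)$ be the $(s,b)$-Generacci sequence, and let $p\ge1$. If an integer $k\ge2$ has an $(s,b)$-Generacci legal decomposition using only summands from $\{a_1,\dots,a_p\}$, then so does $k-1$. Consequently, the smallest positive integer with no such decomposition using $\{a_1,\dots,a_p\}$ is one more than the largest integer that has one.
   Context: Fix integers $s,b\ge1$. For an increasing sequence of positive integers $(a_i)_{i\ge1}$, the bins are $\mathcal B_n=\{a_{b(n-1)+1},\dots,a_{bn}\}$ for $n\ge1$, and $\mathcal B_n=\emptyset$ for $n\le 0$. An $(s,b)$-Generacci legal decomposition of a positive integer $m$ using this sequence is an expression $m=a_{\ell_1}+\cdots+a_{\ell_k}$ with $a_{\ell_1}>a_{\ell_2}>\cdots>a_{\ell_k}$ such that for all $i$ and all $j$, $\{a_{\ell_i},a_{\ell_{i+1}}\}\not\subset \mathcal B_{j-s}\cup\mathcal B_{j-s+1}\cup\cdots\cup\mathcal B_j$ (so no two summands lie in the same bin, and the bins containing any two summands have at least $s$ bins strictly between them). The $(s,b)$-Generacci sequence is the increasing sequence of positive integers $(a_i)_{i\ge1}$ in which each $a_i$ is the smallest positive integer that has no $(s,b)$-Generacci legal decomposition using only elements of $\{a_1,\dots,a_{i-1}\}$. *)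

theory Defs
  imports Main
begin

text \<open>Bins are described by the index sets of the sequence: the bin B_n consists of the
  terms with indices b(n-1)+1, ..., bn for n \<ge> 1, and is empty for n \<le> 0.
  Since the sequence is strictly increasing (hence injective), membership of a term a_l
  in B_n is the same as membership of the index l in the n-th index bin.\<close>

definition bin_idx :: "nat \<Rightarrow> int \<Rightarrow> nat set" where
  "bin_idx b n = (if n \<le> 0 then {} else {b * (nat n - 1) + 1 .. b * nat n})"

definition legal_decomp :: "nat \<Rightarrow> nat \<Rightarrow> (nat \<Rightarrow> nat) \<Rightarrow> nat \<Rightarrow> nat \<Rightarrow> bool" where
  "legal_decomp s b a p m \<longleftrightarrow>
     (\<exists>ls. ls \<noteq> [] \<and> set ls \<subseteq> {1..p} \<and>
        sorted_wrt (\<lambda>x y. a x > a y) ls \<and>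
        sum_list (map a ls) = m \<and>
        (\<forall>i. Suc i < length ls \<longrightarrow>
           (\<forall>j::int. \<not> ({ls ! i, ls ! Suc i} \<subseteq> (\<Union>n\<in>{j - int s .. j}. bin_idx b n)))))"

fun gen_list :: "nat \<Rightarrow> nat \<Rightarrow> nat \<Rightarrow> nat list" where
  "gen_list s b 0 = []"
| "gen_list s b (Suc n) =
     (let xs = gen_list s b n
      in xs @ [LEAST m. m > 0 \<and> \<not> legal_decomp s b (\<lambda>i. xs ! (i - 1)) n m])"

text \<open>The (s,b)-Generacci sequence, indexed from 1 (the value at 0 is irrelevant).\<close>

definition generacci :: "nat \<Rightarrow> nat \<Rightarrow> nat \<Rightarrow> nat" where
  "generacci s b i = gen_list s b i ! (i - 1)"

end

theory Submission imports Defs begin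
definition beta :: "nat \<Rightarrow> nat \<Rightarrow> int" where "beta b l = int ((l-1) div b) + 1"

lemma div_eq_iff_nat: "(b::nat) > 0 \<Longrightarrow> x div b = t \<longleftrightarrow> t * b \<le> x \<and> x < Suc t * b"
  using div_less_iff_less_mult[of b x "Suc t"] less_eq_div_iff_mult_less_eq[of b t x] by auto

lemma bin_mem: assumes "b \<ge> 1" "l \<ge> 1" shows "l \<in> bin_idx b n \<longleftrightarrow> n = beta b l"
proof (cases "n \<le> 0")
  case True then show ?thesis by (auto simp: bin_idx_def beta_def)
next
  case False
  define k where "k = nat n"
  have k: "n = int k" "k \<ge> 1" using False by (auto simp: k_def)
  have "(b * (k - 1) + 1 \<le> l \<and> l \<le> b * k) \<longleftrightarrow> (l-1) div b = k - 1"
  proof -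
    have "(l-1) div b = k - 1 \<longleftrightarrow> (k-1)*b \<le> l-1 \<and> l - 1 < Suc (k-1) * b"
      using assms div_eq_iff_nat[of b "l-1" "k-1"] by auto
    also have "\<dots> \<longleftrightarrow> (b * (k - 1) + 1 \<le> l \<and> l \<le> b * k)"
    proof -
      obtain k' where k': "k = Suc k'" using k by (cases k) auto
      have "b * k = b * k' + b" by (simp add: k')
      then show ?thesis using assms unfolding k' by (simp add: mult.commute) linarith
    qed
    finally show ?thesis by simp
  qed
  then show ?thesis using False k by (auto simp: bin_idx_def beta_def)
qed

lemma pair_legal: assumes "b \<ge> 1" "x \<ge> 1" "y \<ge> 1"
  shows "(\<forall>j::int. \<not> {x,y} \<subseteq> (\<Union>n\<in>{j - int s..j}. bin_idx b n)) \<longleftrightarrow> int s < \<bar>beta b x - beta b y\<bar>"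
proof -
  have A: "{x,y} \<subseteq> (\<Union>n\<in>{j - int s..j}. bin_idx b n) \<longleftrightarrow> beta b x \<in> {j - int s..j} \<and> beta b y \<in> {j - int s..j}" for j
    using bin_mem[OF assms(1,2)] bin_mem[OF assms(1,3)] by auto
  have B: "(\<exists>j. beta b x \<in> {j - int s..j} \<and> beta b y \<in> {j - int s..j}) \<longleftrightarrow> \<bar>beta b x - beta b y\<bar> \<le> int s"
  proof
    assume "\<exists>j. beta b x \<in> {j - int s..j} \<and> beta b y \<in> {j - int s..j}" then show "\<bar>beta b x - beta b y\<bar> \<le> int s" by auto
  next
    assume "\<bar>beta b x - beta b y\<bar> \<le> int s"
    then show "\<exists>j. beta b x \<in> {j - int s..j} \<and> beta b y \<in> {j - int s..j}"
      by (intro exI[of _ "max (beta b x) (beta b y)"]) auto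
  qed
  have "(\<forall>j::int. \<not> {x,y} \<subseteq> (\<Union>n\<in>{j - int s..j}. bin_idx b n)) \<longleftrightarrow> \<not> (\<exists>j. beta b x \<in> {j - int s..j} \<and> beta b y \<in> {j - int s..j})"
    using A by blast
  then show ?thesis using B by (simp only: not_le[symmetric])
qed

lemma pair_legal2: assumes "b \<ge> 1" "l \<ge> 1" "l < Suc p'"
  shows "(\<forall>j::int. \<not> {Suc p',l} \<subseteq> (\<Union>n\<in>{j - int s..j}. bin_idx b n)) \<longleftrightarrow> l \<le> b * (p' div b - s)"
proof -
  have le: "(l-1) div b \<le> p' div b" using assms by (intro div_le_mono) auto
  have aux: "u \<le> v \<Longrightarrow> int s < \<bar>(int v + 1) - (int u + 1)\<bar> \<longleftrightarrow> u < v - s" for u v :: nat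
    by linarith
  have "int s < \<bar>beta b (Suc p') - beta b l\<bar> \<longleftrightarrow> (l-1) div b < p' div b - s"
    unfolding beta_def using aux[OF le] by simp
  also have "\<dots> \<longleftrightarrow> l - 1 < (p' div b - s) * b" using assms(1) by (simp add: div_less_iff_less_mult)
  also have "\<dots> \<longleftrightarrow> l \<le> b * (p' div b - s)"
  proof -
    have "l - 1 < X \<longleftrightarrow> l \<le> X" for X :: nat using assms(2) by arith
    then show ?thesis by (simp add: mult.commute)
  qed
  finally show ?thesis using pair_legal[OF assms(1) _ assms(2)] by simp
qed

lemma gen_len: "length (gen_list s b n) = n" by (induction n) (auto simp: Let_def)

lemma gen_prefix: assumes "n \<le> m" "i < n" shows "gen_list s b m ! i = gen_list s b n ! i"
  using assms(1)
proof (induction m rule: dec_induct)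
  case base then show ?case by simp
next
  case (step k)
  then show ?case using assms(2) by (simp add: Let_def nth_append gen_len)
qed

lemma gen_eq: "1 \<le> i \<Longrightarrow> i \<le> n \<Longrightarrow> generacci s b i = gen_list s b n ! (i-1)"
  unfolding generacci_def by (rule gen_prefix[symmetric]) auto

lemma sorted_cong: "set ls \<subseteq> S \<Longrightarrow> (\<And>x. x \<in> S \<Longrightarrow> f x = g x) \<Longrightarrow>
   sorted_wrt (\<lambda>x y. f x > f y) ls = sorted_wrt (\<lambda>x y. g x > g y) ls"
  by (metis (no_types, lifting) sorted_wrt_mono_rel subsetD)

lemma ld_cong: assumes "\<And>i. 1 \<le> i \<Longrightarrow> i \<le> p \<Longrightarrow> a i = a' i"
  shows "legal_decomp s b a p m = legal_decomp s b a' p m"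
proof -
  have "set ls \<subseteq> {1..p} \<Longrightarrow> map a ls = map a' ls \<and>
    sorted_wrt (\<lambda>x y. a x > a y) ls = sorted_wrt (\<lambda>x y. a' x > a' y) ls" for ls
    using assms sorted_cong[of ls "{1..p}" a a'] by (auto intro!: map_cong)
  then show ?thesis unfolding legal_decomp_def by metis
qed

lemma A_Suc: "generacci s b (Suc n) = (LEAST m. m > 0 \<and> \<not> legal_decomp s b (generacci s b) n m)"
proof -
  have "generacci s b (Suc n) = (LEAST m. m > 0 \<and> \<not> legal_decomp s b (\<lambda>i. gen_list s b n ! (i - 1)) n m)"
    by (simp add: generacci_def Let_def nth_append gen_len)
  also have "\<dots> = (LEAST m. m > 0 \<and> \<not> legal_decomp s b (generacci s b) n m)"
    using ld_cong[of n "\<lambda>i. gen_list s b n ! (i - 1)" "generacci s b"] gen_eq by metis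
  finally show ?thesis .
qed

lemma D0: "\<not> legal_decomp s b a 0 m" by (auto simp: legal_decomp_def)

lemma D_mono: "p \<le> p' \<Longrightarrow> legal_decomp s b a p m \<Longrightarrow> legal_decomp s b a p' m"
proof -
  assume "p \<le> p'" "legal_decomp s b a p m"
  then have "{1..p} \<subseteq> {1..p'}" by auto
  from \<open>legal_decomp s b a p m\<close> obtain ls where "ls \<noteq> []" "set ls \<subseteq> {1..p}" "sorted_wrt (\<lambda>x y. a x > a y) ls"
        "sum_list (map a ls) = m" "\<forall>i. Suc i < length ls \<longrightarrow>
           (\<forall>j::int. \<not> ({ls ! i, ls ! Suc i} \<subseteq> (\<Union>n\<in>{j - int s .. j}. bin_idx b n)))"
    unfolding legal_decomp_def by blast
  then show ?thesis unfolding legal_decomp_def using \<open>{1..p} \<subseteq> {1..p'}\<close>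
    by (intro exI[of _ ls]) blast
qed

lemma D_single: "1 \<le> p \<Longrightarrow> legal_decomp s b a p (a p)"
  unfolding legal_decomp_def by (rule exI[of _ "[p]"]) auto

lemma sorted_distinct: "sorted_wrt (\<lambda>x y. (a::nat\<Rightarrow>nat) x > a y) ls \<Longrightarrow> distinct ls"
  by (induction ls) auto

lemma D_bound: "legal_decomp s b a p m \<Longrightarrow> m \<le> sum a {1..p}"
proof -
  assume "legal_decomp s b a p m"
  then obtain ls where ls: "set ls \<subseteq> {1..p}" "sorted_wrt (\<lambda>x y. a x > a y) ls" "sum_list (map a ls) = m"
    unfolding legal_decomp_def by blast
  have "m = sum a (set ls)" using ls sorted_distinct[OF ls(2)] by (simp add: sum_list_distinct_conv_sum_set)
  also have "\<dots> \<le> sum a {1..p}" by (rule sum_mono2) (use ls in auto)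
  finally show ?thesis .
qed

lemma A_least: 
  "generacci s b (Suc n) > 0 \<and> \<not> legal_decomp s b (generacci s b) n (generacci s b (Suc n))
   \<and> (\<forall>m. 0 < m \<and> m < generacci s b (Suc n) \<longrightarrow> legal_decomp s b (generacci s b) n m)"
proof -
  let ?P = "\<lambda>m. m > 0 \<and> \<not> legal_decomp s b (generacci s b) n m"
  have ex: "?P (Suc (sum (generacci s b) {1..n}))" using D_bound by fastforce
  show ?thesis unfolding A_Suc using LeastI[of ?P, OF ex] not_less_Least[of _ ?P] by blast
qed

lemma A_step: "1 \<le> n \<Longrightarrow> generacci s b n < generacci s b (Suc n)"
proof -
  assume n: "1 \<le> n"
  then obtain n' where n': "n = Suc n'" by (cases n) auto
  have "legal_decomp s b (generacci s b) n m" if "0 < m" "m \<le> generacci s b n" for m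
  proof (cases "m = generacci s b n")
    case True then show ?thesis using D_single n by metis
  next
    case False then show ?thesis using A_least[of s b n'] that n' D_mono[of n' n] by auto
  qed
  then show ?thesis using A_least[of s b n] by (meson not_le)
qed

lemma A_strict: "1 \<le> i \<Longrightarrow> i < j \<Longrightarrow> generacci s b i < generacci s b j"
proof -
  assume i: "1 \<le> i" and "i < j"
  then have "Suc i \<le> j" by simp
  then show ?thesis
  proof (induction j rule: dec_induct)
    case base then show ?case using A_step i by blast
  next
    case (step k) then show ?case using A_step[of k s b] i by auto
  qed
qed

lemma A_less_iff: "1 \<le> x \<Longrightarrow> 1 \<le> y \<Longrightarrow> generacci s b x < generacci s b y \<longleftrightarrow> x < y"
proof
  assume "1 \<le> x" "1 \<le> y" "generacci s b x < generacci s b y"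
  then show "x < y" using A_strict[of y x s b] by (cases "x < y") (auto simp: not_less le_less)
next
  assume "1 \<le> x" "x < y" then show "generacci s b x < generacci s b y" by (rule A_strict)
qed

lemma chain_Cons2: "(\<forall>i. Suc i < length (x#y#ys) \<longrightarrow> P ((x#y#ys)!i) ((x#y#ys)!Suc i)) \<longleftrightarrow>
   P x y \<and> (\<forall>i. Suc i < length (y#ys) \<longrightarrow> P ((y#ys)!i) ((y#ys)!Suc i))"
proof
  assume H: "\<forall>i. Suc i < length (x#y#ys) \<longrightarrow> P ((x#y#ys)!i) ((x#y#ys)!Suc i)"
  show "P x y \<and> (\<forall>i. Suc i < length (y#ys) \<longrightarrow> P ((y#ys)!i) ((y#ys)!Suc i))"
  proof
    show "P x y" using H[rule_format, of 0] by simp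
    show "\<forall>i. Suc i < length (y#ys) \<longrightarrow> P ((y#ys)!i) ((y#ys)!Suc i)"
      using H[rule_format, of "Suc _"] by simp
  qed
next
  assume H: "P x y \<and> (\<forall>i. Suc i < length (y#ys) \<longrightarrow> P ((y#ys)!i) ((y#ys)!Suc i))"
  show "\<forall>i. Suc i < length (x#y#ys) \<longrightarrow> P ((x#y#ys)!i) ((x#y#ys)!Suc i)"
  proof (intro allI impI)
    fix i assume "Suc i < length (x#y#ys)"
    then show "P ((x#y#ys)!i) ((x#y#ys)!Suc i)" using H by (cases i) auto
  qed
qed

lemma interval:
  assumes b: "b \<ge> 1"
  shows "\<exists>N. {m. legal_decomp s b (generacci s b) p m} = {1..N}"
proof (induction p rule: less_induct)
  case (less p)
  let ?A = "generacci s b"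
  let ?D = "\<lambda>p. {m. legal_decomp s b ?A p m}"
  let ?leg = "\<lambda>x y. \<forall>j::int. \<not> {x,y} \<subseteq> (\<Union>n\<in>{j - int s..j}. bin_idx b n)"
  show ?case
  proof (cases p)
    case 0 then show ?thesis using D0 by (intro exI[of _ 0]) auto
  next
    case (Suc p')
    define q where "q = b * (p' div b - s)"
    have qp: "q < p" unfolding q_def Suc
      by (metis diff_le_self dual_order.trans less_Suc_eq_le mult.commute mult_le_mono2 times_div_less_eq_dividend)
    obtain N' where N': "?D p' = {1..N'}" using less Suc by blast
    obtain Nq where Nq: "?D q = {1..Nq}" using less qp by blast
    have N'i: "legal_decomp s b ?A p' m \<longleftrightarrow> m \<in> {1..N'}" for m using N' by blast
    have Ap: "?A p = N' + 1"
      unfolding Suc A_Suc N'i by (intro Least_equality) auto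
    have leg: "?leg p l \<longleftrightarrow> l \<le> q" if "1 \<le> l" "l < p" for l
      using pair_legal2[OF b that(1)] that unfolding Suc q_def by simp
    have "?D p = {1..?A p + Nq}"
    proof
      show "{1..?A p + Nq} \<subseteq> ?D p"
      proof
        fix m assume m: "m \<in> {1..?A p + Nq}"
        show "m \<in> ?D p"
        proof (cases "m \<le> N'")
          case True then have "legal_decomp s b ?A p' m" using N'i m by auto
          then show ?thesis using D_mono[of p' p] Suc by auto
        next
          case False
          show ?thesis
          proof (cases "m = ?A p")
            case True then show ?thesis using D_single Suc by auto
          next
            case False2: False
            then have "m - ?A p \<in> ?D q" using Nq m False Ap by auto
            then obtain ls where ls: "ls \<noteq> []" "set ls \<subseteq> {1..q}" "sorted_wrt (\<lambda>x y. ?A x > ?A y) ls"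
              "sum_list (map ?A ls) = m - ?A p"
              "\<forall>i. Suc i < length ls \<longrightarrow> ?leg (ls ! i) (ls ! Suc i)"
              unfolding legal_decomp_def by auto
            then obtain y ys where yys: "ls = y # ys" by (cases ls) auto
            have "legal_decomp s b ?A p m" unfolding legal_decomp_def
            proof (intro exI[of _ "p # ls"] conjI)
              show "p # ls \<noteq> []" by simp
              show "set (p # ls) \<subseteq> {1..p}" using ls(2) qp Suc by auto
              show "sorted_wrt (\<lambda>x y. ?A x > ?A y) (p # ls)"
                using ls(2,3) qp A_strict[of _ p s b] by auto
              show "sum_list (map ?A (p # ls)) = m" using ls(4) False Ap by simp
              have y: "1 \<le> y" "y < p" "y \<le> q" using ls(2) yys qp by auto
              have "?leg p y" using leg[OF y(1,2)] y(3) by (rule iffD2)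
              then show "\<forall>i. Suc i < length (p # ls) \<longrightarrow> ?leg ((p # ls) ! i) ((p # ls) ! Suc i)"
                using ls(5) unfolding yys by (intro chain_Cons2[of p y ys ?leg, THEN iffD2] conjI)
            qed
            then show ?thesis by simp
          qed
        qed
      qed
    next
      show "?D p \<subseteq> {1..?A p + Nq}"
      proof
        fix m assume "m \<in> ?D p"
        then obtain ls where ls: "ls \<noteq> []" "set ls \<subseteq> {1..p}" "sorted_wrt (\<lambda>x y. ?A x > ?A y) ls"
              "sum_list (map ?A ls) = m"
              "\<forall>i. Suc i < length ls \<longrightarrow> ?leg (ls ! i) (ls ! Suc i)"
              unfolding legal_decomp_def by auto
        show "m \<in> {1..?A p + Nq}"
        proof (cases "p \<in> set ls")
          case False
          have "set ls \<subseteq> {1..p'}"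
          proof
            fix x assume "x \<in> set ls"
            then have "x \<in> {1..p}" "x \<noteq> p" using ls(2) False by auto
            then show "x \<in> {1..p'}" using Suc by auto
          qed
          then have "legal_decomp s b ?A p' m" unfolding legal_decomp_def
            using ls(1,3,4,5) by (intro exI[of _ ls] conjI) (assumption | rule refl)+
          then have "m \<in> {1..N'}" using N'i by blast
          then show ?thesis using Ap by auto
        next
          case True
          obtain h rest where hr: "ls = h # rest" using ls(1) by (cases ls) auto
          have "h = p"
          proof (rule ccontr)
            assume "h \<noteq> p"
            then have "p \<in> set rest" using True hr by auto
            then have "?A h > ?A p" using ls(3) hr by auto
            moreover have "h \<le> p" "1 \<le> h" using ls(2) hr by auto
            ultimately show False using A_less_iff[of p h s b] Suc by auto
          qed
          show ?thesis
          proof (cases rest)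
            case Nil then show ?thesis using ls(4) hr \<open>h = p\<close> Ap by simp
          next
            case (Cons y ys)
            have y1: "1 \<le> y" "y < p" using ls(2,3) hr Cons \<open>h = p\<close> A_less_iff[of y p s b] Suc by auto
            have ch: "?leg p y \<and> (\<forall>i. Suc i < length rest \<longrightarrow> ?leg (rest ! i) (rest ! Suc i))"
              using ls(5) unfolding hr Cons \<open>h = p\<close> by (rule chain_Cons2[of p y ys ?leg, THEN iffD1])
            then have "?leg p y" by (rule conjunct1)
            then have yq: "y \<le> q" using leg y1 by blast
            have "set rest \<subseteq> {1..q}"
            proof
              fix z assume z: "z \<in> set rest"
              show "z \<in> {1..q}"
              proof (cases "z = y")
                case True then show ?thesis using y1 yq by simp
              next
                case False
                then have "z \<in> set ys" using z Cons by simp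
                then have "?A y > ?A z" using ls(3) hr Cons by auto
                moreover have "1 \<le> z" using ls(2) hr \<open>z \<in> set ys\<close> Cons by auto
                ultimately show ?thesis using A_less_iff[of z y s b] y1 yq by auto
              qed
            qed
            then have "sum_list (map ?A rest) \<in> ?D q"
            proof -
              have "sorted_wrt (\<lambda>x y. ?A x > ?A y) rest" using ls(3) hr by simp
              moreover have "rest \<noteq> []" using Cons by simp
              ultimately show ?thesis unfolding legal_decomp_def
                using \<open>set rest \<subseteq> {1..q}\<close> conjunct2[OF ch]
                by (intro CollectI exI[of _ rest] conjI) (assumption | rule refl)+
            qed
            then show ?thesis using Nq ls(4) hr \<open>h = p\<close> by auto
          qed
        qed
      qed
    qed
    then show ?thesis by blast
  qed
qed

theorem mainTheorem5:
  fixes s b p :: nat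
  assumes "s \<ge> 1" and "b \<ge> 1" and "p \<ge> 1"
  shows "(\<forall>k::nat. k \<ge> 2 \<longrightarrow> legal_decomp s b (generacci s b) p k
                       \<longrightarrow> legal_decomp s b (generacci s b) p (k - 1))
       \<and> (LEAST m::nat. m > 0 \<and> \<not> legal_decomp s b (generacci s b) p m)
           = Max {m. legal_decomp s b (generacci s b) p m} + 1"
proof -
  obtain N where N: "{m. legal_decomp s b (generacci s b) p m} = {1..N}"
    using interval[OF assms(2)] by blast
  have "generacci s b p \<in> {1..N}" using D_single[OF assms(3)] N by blast
  then have N1: "1 \<le> N" by simp
  have ld: "legal_decomp s b (generacci s b) p m \<longleftrightarrow> m \<in> {1..N}" for m using N by blast
  have "Max {m. legal_decomp s b (generacci s b) p m} = N" unfolding N using N1 by (intro Max_eqI) auto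
  moreover have "(LEAST m::nat. m > 0 \<and> \<not> legal_decomp s b (generacci s b) p m) = N + 1"
    unfolding ld by (rule Least_equality) auto
  ultimately show ?thesis unfolding ld by auto
qed
end
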